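(* Let $(\breve{r}^{(k)})_{k\ge 0}$ be independent real-valued random variables with $\Pr(\breve{r}^{(k)}<0)=\Pr(\breve{r}^{(k)}>0)=\tfrac12$ for all $k$, and for $k\ge1$ let $\psi^{(k)}=1$ if $\mathrm{sgn}(\breve{r}^{(k)})=-\mathrm{sgn}(\breve{r}^{(k-1)})$ and $\psi^{(k)}=0$ otherwise. Fix an integer $\ell\ge 10$ and define the Memoryless Runtime Estimator $$\hat H^{(0)}=\tfrac12,\qquad \hat H^{(k)}=\hat H^{(k-1)}+\frac{\psi^{(k)}-\hat H^{(k-1)}}{\ell},\quad k\ge1.$$ Then the (steady-state) variance of the sign-switching rate estimate is $$\mathrm{Var}[H]=\lim_{k\to\infty}\mathrm{Var}[\hat H^{(k)}]=\frac{\mathbb{E}[H](1-\mathbb{E}[H])}{2\ell-1}=\frac{1}{4(2\ell-1)},$$ where $\mathbb{E}[H]=\tfrac12$ is the expected sign-switching rate.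
   Context: This models a monitoring vehicle $i$ observing a neighbor vehicle $j$ that follows a "hidden" virtual spring-damper control model. $\breve{r}^{(k)}$ is the hidden velocity residual (received velocity magnitude of $j$ minus its prediction under the hidden model), modeled under the hidden model as a random sequence with positive and negative values each of probability $\tfrac12$; $\psi^{(k)}$ is the alarm indicating a sign switch at time $k$; $\ell$ is the "pseudo-window" length of the estimator and $\hat H^{(k)}\in[0,1]$ is the run-time estimate of the sign-switching alarm rate. *)

theory Defs
  imports "HOL-Probability.Probability"
begin

text \<open>Sign-switch alarm: for k \<ge> 1, psi k = 1 iff sgn (r k) = - sgn (r (k-1)), else 0.
  (The value at k = 0 is never used.)\<close>
definition sign_switch :: "(nat \<Rightarrow> 'a \<Rightarrow> real) \<Rightarrow> nat \<Rightarrow> 'a \<Rightarrow> real" where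
  "sign_switch r k \<omega> = (if sgn (r k \<omega>) = - sgn (r (k - 1) \<omega>) then 1 else 0)"

primrec mre :: "nat \<Rightarrow> (nat \<Rightarrow> 'a \<Rightarrow> real) \<Rightarrow> nat \<Rightarrow> 'a \<Rightarrow> real" where
  "mre l psi 0 \<omega> = 1 / 2"
| "mre l psi (Suc k) \<omega> = mre l psi k \<omega> + (psi (Suc k) \<omega> - mre l psi k \<omega>) / real l"

end

theory Submission imports Defs begin

lemma mre_cong:
  "(\<And>i. i \<le> k \<Longrightarrow> R i x = R' i y) \<Longrightarrow> mre l (sign_switch R) k x = mre l (sign_switch R') k y"
proof (induction k)
  case 0 then show ?case by simp
next
  case (Suc k)
  have "mre l (sign_switch R) k x = mre l (sign_switch R') k y" using Suc by simp
  moreover have "sign_switch R (Suc k) x = sign_switch R' (Suc k) y"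
    using Suc.prems[of "Suc k"] Suc.prems[of k] by (simp add: sign_switch_def)
  ultimately show ?case by simp
qed

lemma mre_bounds:
  assumes "l \<ge> 1"
  shows "0 \<le> mre l (sign_switch R) k x \<and> mre l (sign_switch R) k x \<le> 1"
proof (induction k)
  case 0 then show ?case by simp
next
  case (Suc k)
  define h where "h = mre l (sign_switch R) k x"
  define p where "p = sign_switch R (Suc k) x"
  have p: "p = 0 \<or> p = 1" unfolding p_def sign_switch_def by simp
  have h: "0 \<le> h" "h \<le> 1" using Suc unfolding h_def by auto
  have l: "real l \<ge> 1" using assms by simp
  have eq: "h + (p - h) / real l = ((real l - 1) * h + p) / real l" using l by (simp add: field_simps)
  have "0 \<le> ((real l - 1) * h + p) / real l" using p h l by auto
  moreover have "((real l - 1) * h + p) / real l \<le> 1"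
  proof -
    have "(real l - 1) * h \<le> (real l - 1) * 1" using h l by (intro mult_left_mono) auto
    then show ?thesis using p l by (auto simp: field_simps)
  qed
  ultimately show ?case using eq by (simp add: h_def p_def)
qed

lemma G_meas:
  "{..k} \<subseteq> K \<Longrightarrow> (\<lambda>f. mre l (sign_switch (\<lambda>i f. f i)) k f) \<in> borel_measurable (PiM K (\<lambda>_. borel))"
proof (induction k)
  case 0 then show ?case by simp
next
  case (Suc k)
  have "Suc k \<in> K" "k \<in> K" using Suc.prems by auto
  then have m1: "(\<lambda>f. sign_switch (\<lambda>i f. f i) (Suc k) f) \<in> borel_measurable (PiM K (\<lambda>_. borel))"
    unfolding sign_switch_def diff_Suc_1 by measurable
  have m2: "(\<lambda>f. mre l (sign_switch (\<lambda>i f. f i)) k f) \<in> borel_measurable (PiM K (\<lambda>_. borel))"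
  proof -
    have "{..k} \<subseteq> K" using Suc.prems by auto
    then show ?thesis by (rule Suc.IH)
  qed
  have "(\<lambda>f. mre l (sign_switch (\<lambda>i f. f i)) k f + (sign_switch (\<lambda>i f. f i) (Suc k) f - mre l (sign_switch (\<lambda>i f. f i)) k f) / real l) \<in> borel_measurable (PiM K (\<lambda>_. borel))"
    using m1 m2 by measurable
  then show ?case by simp
qed

locale mset = prob_space M for M :: "'a measure" +
  fixes r :: "nat \<Rightarrow> 'a \<Rightarrow> real"
  assumes ind: "indep_vars (\<lambda>_. borel) r UNIV"
    and neg: "\<And>k. measure M {\<omega> \<in> space M. r k \<omega> < 0} = 1 / 2"
    and pos: "\<And>k. measure M {\<omega> \<in> space M. r k \<omega> > 0} = 1 / 2"
begin

lemma rm[measurable]: "r i \<in> borel_measurable M"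
  using ind unfolding indep_vars_def by auto

lemma zero_prob: "measure M {\<omega> \<in> space M. r k \<omega> = 0} = 0"
proof -
  have "measure M ({\<omega> \<in> space M. r k \<omega> < 0} \<union> {\<omega> \<in> space M. r k \<omega> > 0}) = 1/2 + 1/2"
    using neg[of k] pos[of k] by (subst finite_measure_Union) auto
  moreover have "{\<omega> \<in> space M. r k \<omega> = 0} = space M - ({\<omega> \<in> space M. r k \<omega> < 0} \<union> {\<omega> \<in> space M. r k \<omega> > 0})"
    by auto
  ultimately show ?thesis by (simp add: prob_compl)
qed

lemma AE_nz: "AE \<omega> in M. r k \<omega> \<noteq> 0"
proof -
  have "{\<omega> \<in> space M. r k \<omega> = 0} \<in> sets M" by measurable
  then show ?thesis using zero_prob
    by (subst AE_iff_measurable[of "{\<omega> \<in> space M. r k \<omega> = 0}"]) (auto simp: emeasure_eq_measure)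
qed

lemma bnd_int: fixes f :: "'a \<Rightarrow> real" shows "f \<in> borel_measurable M \<Longrightarrow> (\<And>x. \<bar>f x\<bar> \<le> B) \<Longrightarrow> integrable M f"
  by (intro integrable_const_bound[where B=B]) auto

lemma E_sgn: "expectation (\<lambda>\<omega>. sgn (r k \<omega>)) = 0"
proof -
  have "expectation (\<lambda>\<omega>. sgn (r k \<omega>)) = expectation (\<lambda>\<omega>. indicator {\<omega> \<in> space M. r k \<omega> > 0} \<omega> - indicator {\<omega> \<in> space M. r k \<omega> < 0} \<omega>)"
    by (intro Bochner_Integration.integral_cong) (auto simp: sgn_if indicator_def)
  also have "\<dots> = 0"
    by (subst Bochner_Integration.integral_diff) (auto simp: neg pos intro!: bnd_int[where B=1])
  finally show ?thesis .
qed

lemma key: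
  fixes g :: "(nat \<Rightarrow> real) \<Rightarrow> real"
  assumes g: "g \<in> borel_measurable (PiM {..k} (\<lambda>_. borel))" and gb: "\<And>f. \<bar>g f\<bar> \<le> B"
  shows "expectation (\<lambda>\<omega>. (sign_switch r (Suc k) \<omega> - 1/2) * g (\<lambda>i\<in>{..k}. r i \<omega>)) = 0"
proof -
  define T where "T = (\<lambda>\<omega>. \<lambda>i\<in>{..k}. r i \<omega>)"
  have Tm: "T \<in> measurable M (PiM {..k} (\<lambda>_. borel))"
    unfolding T_def by (intro measurable_restrict) simp
  have gT: "(\<lambda>\<omega>. g (T \<omega>)) \<in> borel_measurable M"
    using measurable_comp[OF Tm g] by (simp add: comp_def)
  have iv: "indep_var (PiM {Suc k} (\<lambda>_. borel)) (\<lambda>\<omega>. \<lambda>i\<in>{Suc k}. r i \<omega>) (PiM {..k} (\<lambda>_. borel)) T"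
    unfolding T_def by (intro indep_var_restrict[OF ind]) auto
  have c1: "(\<lambda>f::nat\<Rightarrow>real. f (Suc k)) \<in> borel_measurable (PiM {Suc k} (\<lambda>_. borel))"
    by (rule measurable_component_singleton) simp
  have c2: "(\<lambda>f::nat\<Rightarrow>real. f k) \<in> borel_measurable (PiM {..k} (\<lambda>_. borel))"
    by (rule measurable_component_singleton) simp
  have m1: "(\<lambda>f::nat\<Rightarrow>real. sgn (f (Suc k))) \<in> borel_measurable (PiM {Suc k} (\<lambda>_. borel))"
    using measurable_compose[OF c1 borel_measurable_sgn] by simp
  have m2: "(\<lambda>f. sgn (f k) * g f) \<in> borel_measurable (PiM {..k} (\<lambda>_. borel))"
    using g c2 by measurable
  have iv2: "indep_var borel (\<lambda>\<omega>. sgn (r (Suc k) \<omega>)) borel (\<lambda>\<omega>. sgn (r k \<omega>) * g (T \<omega>))"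
    using indep_var_compose[OF iv m1 m2] by (simp add: comp_def T_def)
  have i1: "integrable M (\<lambda>\<omega>. sgn (r (Suc k) \<omega>))"
    by (rule bnd_int[where B=1]) (auto simp: sgn_if)
  have B0: "0 \<le> B" using gb[of undefined] by linarith
  have i2: "integrable M (\<lambda>\<omega>. sgn (r k \<omega>) * g (T \<omega>))"
    by (rule bnd_int[where B=B]) (use gT gb B0 in \<open>auto simp: sgn_if abs_mult\<close>)
  have ssm: "sign_switch r (Suc k) \<in> borel_measurable M"
    unfolding sign_switch_def diff_Suc_1 by measurable
  have "expectation (\<lambda>\<omega>. (sign_switch r (Suc k) \<omega> - 1/2) * g (T \<omega>))
      = expectation (\<lambda>\<omega>. (-1/2) * (sgn (r (Suc k) \<omega>) * (sgn (r k \<omega>) * g (T \<omega>))))"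
  proof (rule integral_cong_AE)
    show "(\<lambda>\<omega>. (sign_switch r (Suc k) \<omega> - 1/2) * g (T \<omega>)) \<in> borel_measurable M"
      using ssm gT by measurable
    show "(\<lambda>\<omega>. (-1/2) * (sgn (r (Suc k) \<omega>) * (sgn (r k \<omega>) * g (T \<omega>)))) \<in> borel_measurable M"
      using gT by measurable
    show "AE \<omega> in M. (sign_switch r (Suc k) \<omega> - 1/2) * g (T \<omega>) = (-1/2) * (sgn (r (Suc k) \<omega>) * (sgn (r k \<omega>) * g (T \<omega>)))"
      using AE_nz[of k] AE_nz[of "Suc k"]
    proof eventually_elim
      case (elim \<omega>)
      then show ?case
        by (cases "r k \<omega> > 0"; cases "r (Suc k) \<omega> > 0") (auto simp: sign_switch_def sgn_if)
    qed
  qed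
  also have "\<dots> = (-1/2) * (expectation (\<lambda>\<omega>. sgn (r (Suc k) \<omega>)) * expectation (\<lambda>\<omega>. sgn (r k \<omega>) * g (T \<omega>)))"
    by (subst indep_var_lebesgue_integral[OF iv2 i1 i2, symmetric]) simp
  also have "\<dots> = 0" by (simp add: E_sgn)
  finally show ?thesis by (simp add: T_def)
qed


lemma main:
  fixes l :: nat
  assumes l: "l \<ge> 1"
  defines "H \<equiv> mre l (sign_switch r)"
  shows "(\<lambda>k. expectation (H k)) \<longlonglongrightarrow> 1/2 \<and> (\<lambda>k. variance (H k)) \<longlonglongrightarrow> 1 / (4 * (2 * real l - 1))"
proof -
  define a where "a = 1 / real l"
  have a: "0 < a" "a \<le> 1" using l by (auto simp: a_def)
  define G where "G k f = mre l (sign_switch (\<lambda>i f. f i)) k f" for k and f :: "nat \<Rightarrow> real"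
  define T where "T k \<omega> = (\<lambda>i\<in>{..k}. r i \<omega>)" for k \<omega>
  define D where "D k \<omega> = H k \<omega> - 1/2" for k \<omega>
  define e where "e k \<omega> = sign_switch r k \<omega> - 1/2" for k \<omega>
  have HG: "H k \<omega> = G k (T k \<omega>)" for k \<omega>
    unfolding H_def G_def T_def by (rule mre_cong) simp
  have Gm: "G k \<in> borel_measurable (PiM {..k} (\<lambda>_. borel))" for k
    unfolding G_def using G_meas[of k "{..k}" l] by simp
  have Tm: "T k \<in> measurable M (PiM {..k} (\<lambda>_. borel))" for k
    unfolding T_def by (intro measurable_restrict) simp
  have Hm: "H k \<in> borel_measurable M" for k
  proof -
    have "H k = (\<lambda>\<omega>. G k (T k \<omega>))" by (simp add: fun_eq_iff HG)
    then show ?thesis using measurable_comp[OF Tm Gm] by (simp add: comp_def)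
  qed
  have Gb: "\<bar>G k f - 1/2\<bar> \<le> 1" for k f
    using mre_bounds[OF l, of "\<lambda>i f. f i" k f] unfolding G_def by auto
  have Db: "\<bar>D k \<omega>\<bar> \<le> 1" for k \<omega>
    using Gb unfolding D_def HG by simp
  have Dm: "D k \<in> borel_measurable M" for k
    unfolding D_def using Hm by measurable
  have em: "e k \<in> borel_measurable M" for k
    unfolding e_def sign_switch_def by measurable
  have eb: "\<bar>e k \<omega>\<bar> \<le> 1" for k \<omega>
    unfolding e_def sign_switch_def by auto
  have e2: "e k \<omega> ^ 2 = 1/4" for k \<omega>
    unfolding e_def sign_switch_def by (auto simp: power2_eq_square)
  have iD: "integrable M (D k)" for k by (rule bnd_int[OF Dm Db])
  have ie: "integrable M (e k)" for k by (rule bnd_int[OF em eb])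
  have iD2: "integrable M (\<lambda>\<omega>. D k \<omega> ^ 2)" for k
  proof (rule bnd_int[where B=1])
    show "(\<lambda>\<omega>. D k \<omega> ^ 2) \<in> borel_measurable M" using Dm by measurable
    show "\<bar>D k \<omega> ^ 2\<bar> \<le> 1" for \<omega> using Db[of k \<omega>] by (simp add: abs_square_le_1)
  qed
  have ieD: "integrable M (\<lambda>\<omega>. e j \<omega> * D k \<omega>)" for j k
  proof (rule bnd_int[where B=1])
    show "(\<lambda>\<omega>. e j \<omega> * D k \<omega>) \<in> borel_measurable M" using Dm em by measurable
    show "\<bar>e j \<omega> * D k \<omega>\<bar> \<le> 1" for \<omega>
      using Db[of k \<omega>] eb[of j \<omega>] by (simp add: abs_mult mult_le_one)
  qed
  have E1: "expectation (e (Suc k)) = 0" for k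
  proof -
    have "e (Suc k) = (\<lambda>\<omega>. (sign_switch r (Suc k) \<omega> - 1/2) * (\<lambda>_. 1) (\<lambda>i\<in>{..k}. r i \<omega>))"
      by (simp add: fun_eq_iff e_def)
    then show ?thesis using key[of "\<lambda>_. 1" k 1] by simp
  qed
  have E2: "expectation (\<lambda>\<omega>. e (Suc k) \<omega> * D k \<omega>) = 0" for k
  proof -
    have m: "(\<lambda>f. G k f - 1/2) \<in> borel_measurable (PiM {..k} (\<lambda>_. borel))"
      using Gm[of k] by measurable
    have eq: "(\<lambda>\<omega>. e (Suc k) \<omega> * D k \<omega>) = (\<lambda>\<omega>. (sign_switch r (Suc k) \<omega> - 1/2) * (\<lambda>f. G k f - 1/2) (\<lambda>i\<in>{..k}. r i \<omega>))"
      by (simp add: fun_eq_iff e_def D_def HG T_def)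
    show ?thesis unfolding eq by (rule key[OF m Gb])
  qed
  have rec: "D (Suc k) \<omega> = (1 - a) * D k \<omega> + a * e (Suc k) \<omega>" for k \<omega>
    unfolding D_def e_def H_def a_def using l by (simp add: field_simps)
  have ED: "expectation (D k) = 0" for k
  proof (induction k)
    case 0 then show ?case by (simp add: D_def H_def)
  next
    case (Suc k)
    have "D (Suc k) = (\<lambda>\<omega>. (1 - a) * D k \<omega> + a * e (Suc k) \<omega>)"
      by (simp add: fun_eq_iff rec)
    then have "expectation (D (Suc k)) = expectation (\<lambda>\<omega>. (1 - a) * D k \<omega>) + expectation (\<lambda>\<omega>. a * e (Suc k) \<omega>)"
      using Bochner_Integration.integral_add[OF integrable_mult_right[OF iD] integrable_mult_right[OF ie]]
      by simp
    also have "\<dots> = (1 - a) * expectation (D k) + a * expectation (e (Suc k))"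
      by simp
    finally show ?case using Suc E1 by simp
  qed
  have iH: "integrable M (H k)" for k
  proof (rule bnd_int[where B=1])
    show "H k \<in> borel_measurable M" by (rule Hm)
    show "\<bar>H k \<omega>\<bar> \<le> 1" for \<omega> using mre_bounds[OF l, of r k \<omega>] unfolding H_def by auto
  qed
  have EH: "expectation (H k) = 1/2" for k
  proof -
    have "D k = (\<lambda>\<omega>. H k \<omega> - 1/2)" by (simp add: fun_eq_iff D_def)
    then have "expectation (D k) = expectation (H k) - expectation (\<lambda>\<omega>. 1/2)"
      using Bochner_Integration.integral_diff[OF iH integrable_const] by simp
    then show ?thesis using ED[of k] by (simp add: prob_space)
  qed
  define V where "V k = expectation (\<lambda>\<omega>. D k \<omega> ^ 2)" for k
  define b where "b = (1 - a)^2"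
  define Vs where "Vs = a^2 / 4 / (1 - b)"
  have b: "0 \<le> b" "b < 1" using a unfolding b_def by (auto simp: power2_eq_square) (smt (verit) mult_less_cancel_right1 mult_nonneg_nonneg)
  define c where "c = 2 * a * (1 - a)"
  have sq: "((1 - a) * x + a * y)^2 = b * x^2 + c * (y * x) + a^2 * y^2" for x y
    by (simp add: b_def c_def power2_eq_square algebra_simps)
  have Vrec: "V (Suc k) = b * V k + a^2/4" for k
  proof -
    have "(\<lambda>\<omega>. D (Suc k) \<omega> ^ 2) = (\<lambda>\<omega>. b * D k \<omega> ^ 2 + c * (e (Suc k) \<omega> * D k \<omega>) + a^2/4)"
      by (simp add: fun_eq_iff rec sq e2)
    then have "V (Suc k) = expectation (\<lambda>\<omega>. b * D k \<omega> ^ 2 + c * (e (Suc k) \<omega> * D k \<omega>) + a^2/4)"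
      unfolding V_def by simp
    also have "\<dots> = expectation (\<lambda>\<omega>. b * D k \<omega> ^ 2 + c * (e (Suc k) \<omega> * D k \<omega>)) + expectation (\<lambda>\<omega>. a^2/4)"
      by (rule Bochner_Integration.integral_add) (use iD2 ieD in auto)
    also have "expectation (\<lambda>\<omega>. b * D k \<omega> ^ 2 + c * (e (Suc k) \<omega> * D k \<omega>)) = expectation (\<lambda>\<omega>. b * D k \<omega> ^ 2) + expectation (\<lambda>\<omega>. c * (e (Suc k) \<omega> * D k \<omega>))"
      by (rule Bochner_Integration.integral_add) (use iD2 ieD in auto)
    finally show ?thesis using E2[of k] unfolding V_def by (simp add: prob_space)
  qed
  have Vcl: "V k = Vs * (1 - b ^ k)" for k
  proof (induction k)
    case 0 then show ?case by (simp add: V_def D_def H_def)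
  next
    case (Suc k)
    have "1 - b \<noteq> 0" using b by simp
    then have "a^2/4 = Vs * (1 - b)" unfolding Vs_def by (simp add: field_simps)
    then have "V (Suc k) = b * (Vs * (1 - b^k)) + Vs * (1 - b)" using Vrec[of k] Suc.IH by simp
    then show ?case by (simp add: algebra_simps)
  qed
  have Var: "variance (H k) = V k" for k
  proof -
    have "(\<lambda>\<omega>. (H k \<omega> - expectation (H k))^2) = (\<lambda>\<omega>. D k \<omega> ^ 2)"
      by (simp add: fun_eq_iff EH D_def)
    then show ?thesis unfolding V_def by simp
  qed
  have "(\<lambda>k. Vs * (1 - b ^ k)) \<longlonglongrightarrow> Vs * (1 - 0)"
    by (intro tendsto_intros LIMSEQ_realpow_zero b)
  then have lim: "(\<lambda>k. variance (H k)) \<longlonglongrightarrow> Vs"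
    by (simp add: Var Vcl)
  have VsE: "Vs = 1 / (4 * (2 * real l - 1))"
    using l unfolding Vs_def b_def a_def by (simp add: field_simps power2_eq_square)
  from lim have lim2: "(\<lambda>k. variance (H k)) \<longlonglongrightarrow> 1 / (4 * (2 * real l - 1))"
    unfolding VsE .
  have "(\<lambda>k. expectation (H k)) = (\<lambda>k. 1/2)" using EH by (intro ext)
  then have l1: "(\<lambda>k. expectation (H k)) \<longlonglongrightarrow> 1/2" by (simp only:) (rule tendsto_const)
  show ?thesis by (intro conjI l1 lim2)
qed

end


theorem lemma3:
  fixes M :: "'a measure" and r :: "nat \<Rightarrow> 'a \<Rightarrow> real" and l :: nat
  assumes "prob_space M"
    and "prob_space.indep_vars M (\<lambda>_. borel) r UNIV"
    and "\<And>k. measure M {\<omega> \<in> space M. r k \<omega> < 0} = 1 / 2"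
    and "\<And>k. measure M {\<omega> \<in> space M. r k \<omega> > 0} = 1 / 2"
    and "l \<ge> 10"
  defines "H \<equiv> mre l (sign_switch r)"
  shows "(\<lambda>k. prob_space.expectation M (H k)) \<longlonglongrightarrow> 1 / 2
    \<and> (\<lambda>k. prob_space.variance M (H k)) \<longlonglongrightarrow> (1 / 2) * (1 - 1 / 2) / (2 * real l - 1)
    \<and> (1 / 2 :: real) * (1 - 1 / 2) / (2 * real l - 1) = 1 / (4 * (2 * real l - 1))"
proof -
  interpret mset M r
    by (intro mset.intro mset_axioms.intro) (use assms in auto)
  have l1: "l \<ge> 1" using assms(5) by simp
  have eq: "(1 / 2 :: real) * (1 - 1 / 2) / (2 * real l - 1) = 1 / (4 * (2 * real l - 1))"
    by simp
  show ?thesis using main[OF l1] unfolding H_def eq by simp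
qed

end
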